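(* Let $\Delta\ge0$, $\alpha,\beta\ge1$, let $\mathcal{D}$ be a distribution over valuation profiles $V$, and for each $V$ let $p^V_1,\dots,p^V_m$ be $(\alpha,\beta)$-balanced prices; let $b_j=\mathbb{E}_V[p^V_j]$. Suppose there exist two posted-pricing schemes obtaining expected welfare $\mathrm{ALG}_1$ and $\mathrm{ALG}_2$ respectively, such that $$\mathrm{ALG}_1\ge\alpha\,\mathbb{E}_V\Big[\sum_{j\in[m]}(p^V_j-e^{4\Delta}b_j)^+\Big]+\Big(\mathrm{OPT}-\alpha\sum_{j\in[m]}b_j\Big),$$ $$\mathrm{ALG}_2\ge\frac1\gamma\Big(\mathbb{E}_V\Big[\sum_{j\in[m]}\min\{p^V_j,e^{4\Delta}b_j\}\Big]-\epsilon\sum_{j\in[m]}b_j\Big)$$ for some $\gamma,\epsilon\ge0$. Then there exists a $\big(\frac{1+\alpha\gamma}{1-\epsilon\alpha\beta}\big)$-competitive posted-price mechanism.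
   Context: Online allocation: $m$ items, $n$ buyers arriving one by one with valuations $v_i:2^{[m]}\to\mathbb{R}_{\ge0}$, profile $V=(v_1,\dots,v_n)\sim\mathcal{D}$; each arriving buyer is irrevocably allocated a subset of remaining items; welfare is $\sum_i v_i(S_i)$. For each $V$, $O^V_1,\dots,O^V_n$ denotes a (fixed) welfare-maximizing allocation of disjoint item sets in hindsight, and $\mathrm{OPT}=\mathbb{E}_V[\sum_i v_i(O^V_i)]$. A posted-pricing scheme fixes (possibly random) item prices $p_1,\dots,p_m\ge0$, and each arriving buyer takes a utility-maximizing set $\arg\max_{S\subseteq\text{remaining}}(v_i(S)-\sum_{j\in S}p_j)$. A mechanism is $c$-competitive if its expected welfare is at least $\mathrm{OPT}/c$. Balanced prices: for a profile $V$ and $\alpha,\beta\ge1$, prices $p^V_1,\dots,p^V_m$ are $(\alpha,\beta)$-balanced if for every buyer $i$ and every $S\subseteq[m]$: (1) $\sum_{j\in O^V_i\setminus S}p^V_j\ge\frac1\alpha\big(v_i(O^V_i)-v_i(O^V_i\cap S)\big)$; (2) $\sum_{j\in O^V_i}p^V_j\le\beta\,v_i(O^V_i)$. *)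

theory Defs
  imports "HOL-Probability.Probability"
begin

(* Buyers are 0..<n (arriving in this order), items are 0..<m. *)

type_synonym valuation = "nat set \<Rightarrow> real"
type_synonym profile = "nat \<Rightarrow> valuation"
type_synonym allocation = "nat \<Rightarrow> nat set"
type_synonym prices = "nat \<Rightarrow> real"

definition valid_profile :: "nat \<Rightarrow> nat \<Rightarrow> profile \<Rightarrow> bool" where
  "valid_profile n m V \<longleftrightarrow> (\<forall>i<n. \<forall>S. S \<subseteq> {..<m} \<longrightarrow> V i S \<ge> 0)"

definition is_allocation :: "nat \<Rightarrow> nat \<Rightarrow> allocation \<Rightarrow> bool" where
  "is_allocation n m A \<longleftrightarrow> (\<forall>i<n. A i \<subseteq> {..<m}) \<and>
     (\<forall>i<n. \<forall>k<n. i \<noteq> k \<longrightarrow> A i \<inter> A k = {})"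

definition welfare :: "nat \<Rightarrow> profile \<Rightarrow> allocation \<Rightarrow> real" where
  "welfare n V A = (\<Sum>i<n. V i (A i))"

definition is_opt_alloc :: "nat \<Rightarrow> nat \<Rightarrow> profile \<Rightarrow> allocation \<Rightarrow> bool" where
  "is_opt_alloc n m V A \<longleftrightarrow> is_allocation n m A \<and>
     (\<forall>O'. is_allocation n m O' \<longrightarrow> welfare n V O' \<le> welfare n V A)"

definition balanced :: "nat \<Rightarrow> nat \<Rightarrow> real \<Rightarrow> real \<Rightarrow> profile \<Rightarrow> allocation \<Rightarrow> prices \<Rightarrow> bool" where
  "balanced n m \<alpha> \<beta> V A p \<longleftrightarrow>
     (\<forall>i<n. \<forall>S. S \<subseteq> {..<m} \<longrightarrow>
        (\<Sum>j\<in>A i - S. p j) \<ge> (1/\<alpha>) * (V i (A i) - V i (A i \<inter> S))) \<and>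
     (\<forall>i<n. (\<Sum>j\<in>A i. p j) \<le> \<beta> * V i (A i))"

(* a utility-maximising set among the remaining items R (fixed, arbitrary tie-breaking) *)
definition buyer_choice :: "valuation \<Rightarrow> prices \<Rightarrow> nat set \<Rightarrow> nat set" where
  "buyer_choice v p R = (SOME S. S \<subseteq> R \<and>
     (\<forall>T. T \<subseteq> R \<longrightarrow> v T - (\<Sum>j\<in>T. p j) \<le> v S - (\<Sum>j\<in>S. p j)))"

fun pp_run :: "valuation list \<Rightarrow> prices \<Rightarrow> nat set \<Rightarrow> real" where
  "pp_run [] p R = 0"
| "pp_run (v # vs) p R = (let S = buyer_choice v p R in v S + pp_run vs p (R - S))"

definition pp_welfare :: "nat \<Rightarrow> nat \<Rightarrow> profile \<Rightarrow> prices \<Rightarrow> real" where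
  "pp_welfare n m V p = pp_run (map V [0..<n]) p {..<m}"

(* a posted-pricing scheme: a distribution over nonnegative item prices, independent of V *)
definition pp_scheme :: "nat \<Rightarrow> prices pmf \<Rightarrow> bool" where
  "pp_scheme m P \<longleftrightarrow> (\<forall>p\<in>set_pmf P. \<forall>j<m. p j \<ge> 0)"

definition pp_exp_welfare :: "nat \<Rightarrow> nat \<Rightarrow> profile pmf \<Rightarrow> prices pmf \<Rightarrow> real" where
  "pp_exp_welfare n m D P =
     measure_pmf.expectation (pair_pmf P D) (\<lambda>(p, V). pp_welfare n m V p)"

end

theory Submission
  imports Defs
begin

theorem lemma4p3:
  fixes n m :: nat and D :: "profile pmf" and Ostar :: "profile \<Rightarrow> allocation"
    and pr :: "profile \<Rightarrow> prices" and P1 P2 :: "prices pmf"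
    and \<Delta> \<alpha> \<beta> \<gamma> \<epsilon> :: real
  assumes "\<Delta> \<ge> 0" and "\<alpha> \<ge> 1" and "\<beta> \<ge> 1" and "\<gamma> \<ge> 0" and "\<epsilon> \<ge> 0"
    and "\<forall>V\<in>set_pmf D. valid_profile n m V"
    and "\<forall>V\<in>set_pmf D. is_opt_alloc n m V (Ostar V)"
    and "\<forall>V\<in>set_pmf D. (\<Union>i<n. Ostar V i) = {..<m}"
    and "integrable (measure_pmf D) (\<lambda>V. welfare n V (Ostar V))"
    and "\<forall>V\<in>set_pmf D. balanced n m \<alpha> \<beta> V (Ostar V) (pr V)"
    and "\<forall>j<m. integrable (measure_pmf D) (\<lambda>V. pr V j)"
    and "pp_scheme m P1" and "pp_scheme m P2"
    and "pp_exp_welfare n m D P1 \<ge>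
           \<alpha> * measure_pmf.expectation D (\<lambda>V. \<Sum>j<m.
              max 0 (pr V j - exp (4 * \<Delta>) * measure_pmf.expectation D (\<lambda>W. pr W j)))
         + (measure_pmf.expectation D (\<lambda>V. welfare n V (Ostar V))
            - \<alpha> * (\<Sum>j<m. measure_pmf.expectation D (\<lambda>W. pr W j)))"
    and "\<gamma> * pp_exp_welfare n m D P2 \<ge>
           (measure_pmf.expectation D (\<lambda>V. \<Sum>j<m.
              min (pr V j) (exp (4 * \<Delta>) * measure_pmf.expectation D (\<lambda>W. pr W j)))
            - \<epsilon> * (\<Sum>j<m. measure_pmf.expectation D (\<lambda>W. pr W j)))"
  shows "\<exists>P. pp_scheme m P \<and>
           pp_exp_welfare n m D P \<ge>
             measure_pmf.expectation D (\<lambda>V. welfare n V (Ostar V))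
             / ((1 + \<alpha> * \<gamma>) / (1 - \<epsilon> * \<alpha> * \<beta>))"
proof -
  define c where "c = exp (4 * \<Delta>)"
  define b where "b j = measure_pmf.expectation D (\<lambda>W. pr W j)" for j
  define B where "B = (\<Sum>j<m. b j)"
  define OPT where "OPT = measure_pmf.expectation D (\<lambda>V. welfare n V (Ostar V))"
  define Mx where "Mx = measure_pmf.expectation D (\<lambda>V. \<Sum>j<m. max 0 (pr V j - c * b j))"
  define Mn where "Mn = measure_pmf.expectation D (\<lambda>V. \<Sum>j<m. min (pr V j) (c * b j))"
  define A1 where "A1 = pp_exp_welfare n m D P1"
  define A2 where "A2 = pp_exp_welfare n m D P2"
  have h1: "A1 \<ge> \<alpha> * Mx + (OPT - \<alpha> * B)"
    using assms(14) unfolding A1_def Mx_def OPT_def B_def b_def c_def by simp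
  have h2: "\<gamma> * A2 \<ge> Mn - \<epsilon> * B"
    using assms(15) unfolding A2_def Mn_def B_def b_def c_def by simp
  have intpr: "integrable (measure_pmf D) (\<lambda>V. pr V j)" if "j < m" for j
    using assms(11) that by blast
  have iMx: "integrable (measure_pmf D) (\<lambda>V. \<Sum>j<m. max 0 (pr V j - c * b j))"
  proof (rule Bochner_Integration.integrable_sum[where f="\<lambda>j V. max 0 (pr V j - c * b j)"])
    fix j assume "j \<in> {..<m}"
    then have "integrable (measure_pmf D) (\<lambda>V. pr V j)" by (simp add: intpr)
    moreover have "integrable (measure_pmf D) (\<lambda>V. c * b j)" by simp
    ultimately have "integrable (measure_pmf D) (\<lambda>V. pr V j - c * b j)"
      by (rule Bochner_Integration.integrable_diff)
    moreover have "integrable (measure_pmf D) (\<lambda>V. 0::real)" by simp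
    ultimately show "integrable (measure_pmf D) (\<lambda>V. max 0 (pr V j - c * b j))"
      using Bochner_Integration.integrable_max by blast
  qed
  have iMn: "integrable (measure_pmf D) (\<lambda>V. \<Sum>j<m. min (pr V j) (c * b j))"
  proof (rule Bochner_Integration.integrable_sum[where f="\<lambda>j V. min (pr V j) (c * b j)"])
    fix j assume "j \<in> {..<m}"
    then have "integrable (measure_pmf D) (\<lambda>V. pr V j)" by (simp add: intpr)
    moreover have "integrable (measure_pmf D) (\<lambda>V. c * b j)" by simp
    ultimately show "integrable (measure_pmf D) (\<lambda>V. min (pr V j) (c * b j))"
      by (rule Bochner_Integration.integrable_min)
  qed
  have iS: "integrable (measure_pmf D) (\<lambda>V. \<Sum>j<m. pr V j)"
    by (rule Bochner_Integration.integrable_sum[where f="\<lambda>j V. pr V j"]) (simp add: intpr)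
  have ptw: "(\<Sum>j<m. max 0 (pr V j - c * b j)) + (\<Sum>j<m. min (pr V j) (c * b j)) = (\<Sum>j<m. pr V j)" for V
    by (simp add: sum.distrib[symmetric], rule sum.cong, auto)
  have "Mx + Mn = measure_pmf.expectation D (\<lambda>V. \<Sum>j<m. pr V j)"
    unfolding Mx_def Mn_def by (subst Bochner_Integration.integral_add[symmetric, OF iMx iMn]) (simp add: ptw)
  also have "\<dots> = B"
    unfolding B_def b_def by (rule Bochner_Integration.integral_sum) (simp add: intpr)
  finally have MM: "Mx + Mn = B" .
  have pt: "(\<Sum>j<m. pr V j) \<le> \<beta> * welfare n V (Ostar V)" if V: "V \<in> set_pmf D" for V
  proof -
    have opt: "is_allocation n m (Ostar V)" using assms(7) V unfolding is_opt_alloc_def by blast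
    have sub: "\<forall>i<n. Ostar V i \<subseteq> {..<m}" and dis: "\<forall>i<n. \<forall>k<n. i \<noteq> k \<longrightarrow> Ostar V i \<inter> Ostar V k = {}"
      using opt unfolding is_allocation_def by auto
    have un: "(\<Union>i<n. Ostar V i) = {..<m}" using assms(8) V by blast
    have bal: "\<forall>i<n. (\<Sum>j\<in>Ostar V i. pr V j) \<le> \<beta> * V i (Ostar V i)"
      using assms(10) V unfolding balanced_def by blast
    have "(\<Sum>j<m. pr V j) = (\<Sum>j\<in>(\<Union>i<n. Ostar V i). pr V j)" using un by simp
    also have "\<dots> = (\<Sum>i<n. \<Sum>j\<in>Ostar V i. pr V j)"
      by (rule sum.UNION_disjoint) (use dis in \<open>auto intro: finite_subset[OF sub[rule_format]]\<close>)
    also have "\<dots> \<le> (\<Sum>i<n. \<beta> * V i (Ostar V i))"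
      by (rule sum_mono) (use bal in auto)
    also have "\<dots> = \<beta> * welfare n V (Ostar V)"
      unfolding welfare_def by (simp add: sum_distrib_left)
    finally show ?thesis .
  qed
  have "B = measure_pmf.expectation D (\<lambda>V. \<Sum>j<m. pr V j)"
    unfolding B_def b_def by (rule Bochner_Integration.integral_sum[symmetric]) (simp add: intpr)
  also have "\<dots> \<le> measure_pmf.expectation D (\<lambda>V. \<beta> * welfare n V (Ostar V))"
    by (rule integral_mono_AE[OF iS]) (use assms(9) pt in \<open>auto simp: AE_measure_pmf_iff\<close>)
  also have "\<dots> = \<beta> * OPT" unfolding OPT_def by simp
  finally have BO: "B \<le> \<beta> * OPT" .
  have ag: "\<alpha> * \<gamma> \<ge> 0" using assms by simp
  have e1: "\<alpha> * (\<gamma> * A2) \<ge> \<alpha> * (Mn - \<epsilon> * B)"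
    using h2 assms(2) by (intro mult_left_mono) auto
  have e2: "\<alpha> * (Mn - \<epsilon> * B) = \<alpha> * Mn - \<alpha> * \<epsilon> * B"
    by (simp add: algebra_simps)
  have e3: "\<alpha> * Mx + \<alpha> * Mn = \<alpha> * B" using MM by (metis distrib_left)
  have e4: "\<alpha> * (\<gamma> * A2) = \<alpha> * \<gamma> * A2" by (simp add: mult.assoc)
  have K0: "A1 + \<alpha> * \<gamma> * A2 \<ge> OPT - \<alpha> * \<epsilon> * B"
    using h1 e1 e2 e3 e4 by linarith
  have e5: "\<alpha> * \<epsilon> * B \<le> \<alpha> * \<epsilon> * (\<beta> * OPT)"
    using BO assms by (intro mult_left_mono) auto
  have e6: "\<alpha> * \<epsilon> * (\<beta> * OPT) = OPT * (\<epsilon> * \<alpha> * \<beta>)" by (simp add: mult_ac)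
  have e7: "OPT * (1 - \<epsilon> * \<alpha> * \<beta>) = OPT - OPT * (\<epsilon> * \<alpha> * \<beta>)"
    by (simp add: right_diff_distrib)
  have K: "A1 + \<alpha> * \<gamma> * A2 \<ge> OPT * (1 - \<epsilon> * \<alpha> * \<beta>)"
    using K0 e5 e6 e7 by linarith
  have tgt: "OPT / ((1 + \<alpha> * \<gamma>) / (1 - \<epsilon> * \<alpha> * \<beta>)) = OPT * (1 - \<epsilon> * \<alpha> * \<beta>) / (1 + \<alpha> * \<gamma>)"
    by (simp add: divide_inverse mult.assoc)
  have m1: "A1 \<le> max A1 A2" and m2: "A2 \<le> max A1 A2" by auto
  have m3: "\<alpha> * \<gamma> * A2 \<le> \<alpha> * \<gamma> * max A1 A2"
    using m2 ag by (rule mult_left_mono)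
  have m4: "(1 + \<alpha> * \<gamma>) * max A1 A2 = max A1 A2 + \<alpha> * \<gamma> * max A1 A2"
    by (simp add: distrib_right)
  have m5: "OPT * (1 - \<epsilon> * \<alpha> * \<beta>) \<le> max A1 A2 * (1 + \<alpha> * \<gamma>)"
    using K m1 m3 m4 unfolding mult.commute[of "max A1 A2"] by linarith
  have "OPT * (1 - \<epsilon> * \<alpha> * \<beta>) / (1 + \<alpha> * \<gamma>) \<le> max A1 A2"
    using ag m5 by (subst pos_divide_le_eq) auto
  then show ?thesis
    unfolding tgt OPT_def[symmetric]
    by (cases "A1 \<le> A2") (use assms(12,13) A1_def A2_def in \<open>auto simp: max_def\<close>)
qed

end
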